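(* There exist constants $\mu_0\in(0,1/10)$ and $c>0$, independent of $\mu$, $\varepsilon$ and $\Gamma_0$, with the following property. Let $0<\mu\le\mu_0$ and $\varepsilon\in(0,1)$. Let $q(f)$ be a solution of the ER3BP (with $q=(x-1+\mu,y,z)$) transiting through the Hill's sphere of $P_2$ in the interval $[f_1,f_2]$, i.e. $\|q(f_1)\|=\|q(f_2)\|=\mu^{1/3}$ and $0<\|q(f)\|<\mu^{1/3}$ for all $f\in(f_1,f_2)$, and let $(u(s),\phi(s),U(s),\Phi(s))$ be a solution of the Hamilton equations of the regularized Hamiltonian $\mathcal{K}$ satisfying $l(u,U)=0$ and $\mathcal{K}=0$, related to $q$ by $\phi(s)=f(s)$, $\mathrm{d}f/\mathrm{d}s=\|u(s)\|^2$ and $\pi(u(s))=q(f(s))$ for $s\in[s_1,s_2]$, where $f(s_1)=f_1$, $f(s_2)=f_2$. Set $\Gamma_s=\Gamma(\phi(s),\Phi(s))$ and $\Gamma_0=\Gamma_{s_1}$. If $\Gamma_0>0$ and $\mu<c(1-\varepsilon)^6\Gamma_0^{3/2}$, then $\Gamma_s\in[\Gamma_0/2,\,3\Gamma_0/2]$ for all $s\in[s_1,s_2]$.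
   Context: The ER3BP with mass parameter $\mu$ and eccentricity $\varepsilon$ is given by the Hamiltonian (independent variable the true anomaly $f$ of $P_2$, rotating-pulsating frame with $P_1=(-\mu,0,0)$, $P_2=(1-\mu,0,0)$) $$\mathcal{H}=\tfrac12(p_1^2+p_2^2+p_3^2)+p_1y-xp_2-\frac{1}{1+\varepsilon\cos f}\Big(\frac{1-\mu}{d_1}+\frac{\mu}{d_2}-\tfrac12(x^2+y^2+z^2)\varepsilon\cos f\Big),$$ $d_1=\sqrt{(x+\mu)^2+y^2+z^2}$, $d_2=\sqrt{(x-1+\mu)^2+y^2+z^2}$. Kustaanheimo–Stiefel map: $\pi(u)=(\pi_1,\pi_2,\pi_3)(u)=(u_1^2-u_2^2-u_3^2+u_4^2,\;2u_1u_2-2u_3u_4,\;2u_1u_3+2u_2u_4)$, $u\in\mathbb{R}^4$; $A(u)$ is the $4\times4$ matrix with rows $(u_1,-u_2,-u_3,u_4)$, $(u_2,u_1,-u_4,-u_3)$, $(u_3,u_4,u_1,u_2)$, $(u_4,-u_3,u_2,-u_1)$; $\Lambda$ is the $4\times4$ matrix with only nonzero entries $\Lambda_{12}=-1$, $\Lambda_{21}=1$; $b(u)=2A(u)^T\Lambda A(u)u$; $l(u,U)=u_4U_1-u_3U_2+u_2U_3-u_1U_4$. The regularized Hamiltonian is $$\mathcal{K}(u,\phi,U,\Phi)=\tfrac18\|U-b(u)\|^2-\frac{1}{1+\varepsilon\cos\phi}\Big[(1-\mu)\|u\|^2\Big(\frac{1}{\|\pi(u)+(1,0,0)\|}+\pi_1(u)\Big)+\mu+\tfrac12\|u\|^2\big(\pi_1^2+\pi_2^2-\pi_3^2\varepsilon\cos\phi\big)+\frac{(1-\mu)^2}{2}\|u\|^2\Big]+\Phi\|u\|^2,$$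 with Hamilton equations in the independent variable $s$. Define $\Gamma(\phi,\Phi)=-\Phi+\dfrac{3-4\mu+\mu^2}{2(1+\varepsilon\cos\phi)}$. *)

theory Defs
  imports "HOL-Analysis.Analysis"
begin

text \<open>H t x p : independent variable t, positions x, momenta p.
  x' = dH/dp, p' = - dH/dx (gradients via Frechet derivatives), one-sided at the ends of S.\<close>
definition hamiltonian_solution ::
  "(real \<Rightarrow> 'a::real_inner \<Rightarrow> 'a \<Rightarrow> real) \<Rightarrow> (real \<Rightarrow> 'a) \<Rightarrow> (real \<Rightarrow> 'a) \<Rightarrow> real set \<Rightarrow> bool" where
  "hamiltonian_solution H x p S \<longleftrightarrow>
     (\<forall>t\<in>S. \<exists>dx dp.
        (x has_vector_derivative dx) (at t within S) \<and>
        (p has_vector_derivative dp) (at t within S) \<and>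
        ((\<lambda>y. H t (x t) y) has_derivative (\<lambda>h. dx \<bullet> h)) (at (p t)) \<and>
        ((\<lambda>y. H t y (p t)) has_derivative (\<lambda>h. - (dp \<bullet> h))) (at (x t)))"

definition H_ER3BP :: "real \<Rightarrow> real \<Rightarrow> real \<Rightarrow> real^3 \<Rightarrow> real^3 \<Rightarrow> real" where
  "H_ER3BP \<mu> \<epsilon> f X p =
     (let x = X$1; y = X$2; z = X$3;
          d1 = sqrt ((x + \<mu>)^2 + y^2 + z^2);
          d2 = sqrt ((x - 1 + \<mu>)^2 + y^2 + z^2)
      in (1/2) * ((p$1)^2 + (p$2)^2 + (p$3)^2) + p$1 * y - x * p$2
         - 1 / (1 + \<epsilon> * cos f) *
           ((1 - \<mu>) / d1 + \<mu> / d2 - (1/2) * (x^2 + y^2 + z^2) * \<epsilon> * cos f))"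

definition pi_KS :: "real^4 \<Rightarrow> real^3" where
  "pi_KS u = vector [ (u$1)^2 - (u$2)^2 - (u$3)^2 + (u$4)^2,
                      2 * u$1 * u$2 - 2 * u$3 * u$4,
                      2 * u$1 * u$3 + 2 * u$2 * u$4 ]"

definition A_KS :: "real^4 \<Rightarrow> real^4^4" where
  "A_KS u = vector [ vector [u$1, - u$2, - u$3, u$4],
                     vector [u$2, u$1, - u$4, - u$3],
                     vector [u$3, u$4, u$1, u$2],
                     vector [u$4, - u$3, u$2, - u$1] ]"

definition Lambda_KS :: "real^4^4" where
  "Lambda_KS = (\<chi> i j. if i = 1 \<and> j = 2 then -1 else if i = 2 \<and> j = 1 then 1 else 0)"

definition b_KS :: "real^4 \<Rightarrow> real^4" where
  "b_KS u = 2 *\<^sub>R ((transpose (A_KS u) ** Lambda_KS ** A_KS u) *v u)"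

definition l_KS :: "real^4 \<Rightarrow> real^4 \<Rightarrow> real" where
  "l_KS u U = u$4 * U$1 - u$3 * U$2 + u$2 * U$3 - u$1 * U$4"

definition K_reg :: "real \<Rightarrow> real \<Rightarrow> real^4 \<Rightarrow> real \<Rightarrow> real^4 \<Rightarrow> real \<Rightarrow> real" where
  "K_reg \<mu> \<epsilon> u \<phi> U \<Phi> =
     (let P = pi_KS u; r2 = (norm u)^2 in
       (1/8) * (norm (U - b_KS u))^2
       - 1 / (1 + \<epsilon> * cos \<phi>) *
         ((1 - \<mu>) * r2 * (1 / norm (P + vector [1, 0, 0]) + P$1)
          + \<mu>
          + (1/2) * r2 * ((P$1)^2 + (P$2)^2 - (P$3)^2 * \<epsilon> * cos \<phi>)
          + ((1 - \<mu>)^2 / 2) * r2)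
       + \<Phi> * r2)"

definition K_ham :: "real \<Rightarrow> real \<Rightarrow> real \<Rightarrow> (real^4) \<times> real \<Rightarrow> (real^4) \<times> real \<Rightarrow> real" where
  "K_ham \<mu> \<epsilon> s w W = K_reg \<mu> \<epsilon> (fst w) (snd w) (fst W) (snd W)"

definition Gamma_fn :: "real \<Rightarrow> real \<Rightarrow> real \<Rightarrow> real \<Rightarrow> real" where
  "Gamma_fn \<mu> \<epsilon> \<phi> \<Phi> = - \<Phi> + (3 - 4 * \<mu> + \<mu>^2) / (2 * (1 + \<epsilon> * cos \<phi>))"

end

theory Submission
  imports Defs
begin

lemma vector_4 [simp]:
 "(vector [x,y,z,w] ::('a::zero)^4)$1 = x"
 "(vector [x,y,z,w] ::('a::zero)^4)$2 = y"
 "(vector [x,y,z,w] ::('a::zero)^4)$3 = z"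
 "(vector [x,y,z,w] ::('a::zero)^4)$4 = w"
  unfolding vector_def by simp_all

lemma norm4_sq: "(norm (u::real^4))^2 = (u$1)^2 + (u$2)^2 + (u$3)^2 + (u$4)^2"
  by (simp only: power2_norm_eq_inner) (simp add: inner_vec_def sum_4 power2_eq_square)

lemma norm3_sq: "(norm (u::real^3))^2 = (u$1)^2 + (u$2)^2 + (u$3)^2"
  by (simp only: power2_norm_eq_inner) (simp add: inner_vec_def sum_3 power2_eq_square)

lemma inner4: "inner (u::real^4) v = u$1 * v$1 + u$2 * v$2 + u$3 * v$3 + u$4 * v$4"
  by (simp add: inner_vec_def sum_4)

lemma pi_comp [simp]:
  "pi_KS u $ 1 = (u$1)^2 - (u$2)^2 - (u$3)^2 + (u$4)^2"
  "pi_KS u $ 2 = 2 * u$1 * u$2 - 2 * u$3 * u$4"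
  "pi_KS u $ 3 = 2 * u$1 * u$3 + 2 * u$2 * u$4"
  by (simp_all add: pi_KS_def)

lemma b_comp:
  fixes u :: "real^4"
  defines "p1 \<equiv> pi_KS u $ 1" and "p2 \<equiv> pi_KS u $ 2"
  shows "b_KS u $ 1 = 2 * (- p2 * u$1 + p1 * u$2)"
   "b_KS u $ 2 = 2 * (p2 * u$2 + p1 * u$1)"
   "b_KS u $ 3 = 2 * (p2 * u$3 - p1 * u$4)"
   "b_KS u $ 4 = 2 * (- p2 * u$4 - p1 * u$3)"
  unfolding p1_def p2_def b_KS_def A_KS_def Lambda_KS_def
  by (simp_all add: matrix_vector_mult_def matrix_matrix_mult_def transpose_def sum_4 algebra_simps power2_eq_square)

lemma pi_scale: "pi_KS (c *\<^sub>R u) = (c^2) *\<^sub>R pi_KS u"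
  by (simp add: vec_eq_iff forall_3 algebra_simps power2_eq_square)

lemma b_scale: "b_KS (c *\<^sub>R u) = (c^3) *\<^sub>R b_KS (u::real^4)"
  by (simp add: vec_eq_iff forall_4 b_comp algebra_simps power2_eq_square power3_eq_cube)

lemma norm_pi_sq: "(norm (pi_KS u))^2 = ((norm u)^2)^2"
  unfolding norm3_sq norm4_sq pi_comp by algebra

lemma norm_pi: "norm (pi_KS u) = (norm u)^2"
proof -
  show ?thesis by (metis norm_pi_sq norm_ge_zero power2_eq_iff_nonneg zero_le_power2)
qed

lemma u_b: "inner u (b_KS u) = 0"
  by (simp add: inner4 b_comp algebra_simps power2_eq_square)

lemma norm_b_sq: "(norm (b_KS u))^2 = 4 * ((pi_KS u $ 1)^2 + (pi_KS u $ 2)^2) * (norm u)^2"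
  unfolding norm4_sq b_comp by (simp only: pi_comp) (simp add: power2_eq_square algebra_simps)

lemma norm_b_le: "(norm (b_KS u))^2 \<le> 4 * ((norm u)^2)^3"
proof -
  have "(pi_KS u $ 1)^2 + (pi_KS u $ 2)^2 \<le> (norm (pi_KS u))^2"
    unfolding norm3_sq by simp
  hence "(pi_KS u $ 1)^2 + (pi_KS u $ 2)^2 \<le> ((norm u)^2)^2" by (simp add: norm_pi_sq)
  hence "4 * ((pi_KS u $ 1)^2 + (pi_KS u $ 2)^2) * (norm u)^2 \<le> 4 * ((norm u)^2)^2 * (norm u)^2"
    by (simp add: mult_right_mono)
  moreover have "4 * ((norm u)^2)^2 * (norm u)^2 = 4 * ((norm u)^2)^3" by algebra
  ultimately show ?thesis using norm_b_sq[of u] by linarith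
qed

lemma norm_e_sq: "(norm ((x::real^3) + vector [1,0,0]))^2 = (norm x)^2 + 2 * x$1 + 1"
  unfolding norm3_sq by (simp add: power2_eq_square algebra_simps)

lemma K_explicit: "K_reg \<mu> \<epsilon> u \<phi> U \<Phi> =
  (1/8) * (norm (U - b_KS u))^2 - 1/(1 + \<epsilon> * cos \<phi>) *
   ((1-\<mu>) * (norm u)^2 * (1 / norm (pi_KS u + vector [1,0,0]) + pi_KS u $ 1) + \<mu>
    + 1/2 * (norm u)^2 * ((pi_KS u $ 1)^2 + (pi_KS u $ 2)^2 - (pi_KS u $ 3)^2 * \<epsilon> * cos \<phi>)
    + (1-\<mu>)^2/2 * (norm u)^2) + \<Phi> * (norm u)^2"
  by (simp add: K_reg_def Let_def)


lemma dir_deriv: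
  fixes F :: "'a::real_normed_vector \<Rightarrow> real"
  assumes "(F has_derivative L) (at x)" "((\<lambda>t. F (x + t *\<^sub>R v)) has_real_derivative d) (at 0)"
  shows "L v = d"
proof -
  have "((\<lambda>t. x + t *\<^sub>R v) has_derivative (\<lambda>h. h *\<^sub>R v)) (at 0)"
    by (auto intro!: derivative_eq_intros)
  moreover have "(F has_derivative L) (at (x + 0 *\<^sub>R v))" using assms(1) by simp
  ultimately have "((F \<circ> (\<lambda>t. x + t *\<^sub>R v)) has_derivative (L \<circ> (\<lambda>h. h *\<^sub>R v))) (at 0)"
    by (rule diff_chain_at)
  moreover have "((F \<circ> (\<lambda>t. x + t *\<^sub>R v)) has_derivative (*) d) (at 0)"
    using assms(2) by (simp add: has_field_derivative_def comp_def)
  ultimately have "(L \<circ> (\<lambda>h. h *\<^sub>R v)) = (*) d" by (rule has_derivative_unique)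
  hence "(L \<circ> (\<lambda>h. h *\<^sub>R v)) 1 = d * 1" by simp
  thus ?thesis by simp
qed

lemma norm_diff_sq: "(norm (a - b :: 'a::real_inner))^2 = (norm a)^2 - 2 * inner a b + (norm b)^2"
  by (simp add: power2_norm_eq_inner inner_diff_left inner_diff_right inner_commute)

lemma norm_add_sq: "(norm (a + b :: 'a::real_inner))^2 = (norm a)^2 + 2 * inner a b + (norm b)^2"
  by (simp add: power2_norm_eq_inner inner_add_left inner_add_right inner_commute)

lemma K_scale_u:
  fixes u :: "real^4"
  defines "r \<equiv> (norm u)^2" and "P \<equiv> pi_KS u" and "b \<equiv> b_KS u"
  shows "K_reg \<mu> \<epsilon> (c *\<^sub>R u) \<phi> U \<Phi> =
   (1/8) * ((norm U)^2 - 2 * c^3 * inner U b + (c^3)^2 * (norm b)^2) - 1/(1 + \<epsilon> * cos \<phi>) *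
   ((1-\<mu>) * (c^2 * r) * (1 / sqrt ((c^2)^2 * r^2 + 2 * (c^2 * P$1) + 1) + c^2 * P $ 1) + \<mu>
    + 1/2 * (c^2 * r) * ((c^2)^2 * ((P $ 1)^2 + (P $ 2)^2 - (P $ 3)^2 * \<epsilon> * cos \<phi>))
    + (1-\<mu>)^2/2 * (c^2 * r)) + \<Phi> * (c^2 * r)"
proof -
  have n1: "(norm (c *\<^sub>R u))^2 = c^2 * r" by (simp add: r_def power_mult_distrib)
  have n2: "(norm (U - b_KS (c *\<^sub>R u)))^2 = (norm U)^2 - 2 * c^3 * inner U b + (c^3)^2 * (norm b)^2"
    by (simp add: b_scale norm_diff_sq b_def power_mult_distrib)
  have n3: "norm (pi_KS (c *\<^sub>R u) + vector [1,0,0]) = sqrt ((c^2)^2 * r^2 + 2 * (c^2 * P$1) + 1)"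
  proof -
    have "(norm (pi_KS (c *\<^sub>R u) + vector [1,0,0]))^2 = (c^2)^2 * r^2 + 2 * (c^2 * P$1) + 1"
      by (simp add: norm_e_sq pi_scale P_def r_def norm_pi power_mult_distrib)
    thus ?thesis by (metis norm_ge_zero real_sqrt_unique)
  qed
  have n4: "(pi_KS (c *\<^sub>R u) $ 1)^2 + (pi_KS (c *\<^sub>R u) $ 2)^2 - (pi_KS (c *\<^sub>R u) $ 3)^2 * \<epsilon> * cos \<phi>
     = (c^2)^2 * ((P $ 1)^2 + (P $ 2)^2 - (P $ 3)^2 * \<epsilon> * cos \<phi>)"
    unfolding pi_scale P_def by (simp del: pi_comp add: power_mult_distrib algebra_simps)
  show ?thesis
    unfolding K_explicit n1 n2 n3 n4 by (simp add: pi_scale P_def)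
qed


lemma D3_scalar:
  fixes UU Ub bb r P1 Q \<rho> \<mu> \<Phi> :: real
  assumes pos: "0 < r^2 + 2*P1 + 1" and rho: "\<rho> \<noteq> 0"
  defines "D \<equiv> sqrt (r^2 + 2*P1 + 1)"
  shows "((\<lambda>t. (1/8) * (UU - 2 * (1+t)^3 * Ub + ((1+t)^3)^2 * bb) - 1/\<rho> *
   ((1-\<mu>) * ((1+t)^2 * r) * (1 / sqrt (((1+t)^2)^2 * r^2 + 2 * ((1+t)^2 * P1) + 1) + (1+t)^2 * P1) + \<mu>
    + 1/2 * ((1+t)^2 * r) * (((1+t)^2)^2 * Q)
    + (1-\<mu>)^2/2 * ((1+t)^2 * r)) + \<Phi> * ((1+t)^2 * r)) has_real_derivative
    ((1/8)*(-6*Ub + 6*bb) - 1/\<rho>*((1-\<mu>)*(2*r*(1/D + P1) + r*(-(2*r^2+2*P1)/D^3 + 2*P1)) + 3*r*Q + (1-\<mu>)^2*r) + 2*\<Phi>*r)) (at 0)"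
proof -
  have Dpos: "0 < D" using pos by (simp add: D_def)
  have D2: "D^2 = r^2 + 2*P1 + 1" using pos by (simp add: D_def)
  show ?thesis
    using pos Dpos rho
    apply (auto intro!: derivative_eq_intros simp: D_def[symmetric])
    apply (simp add: field_simps power3_eq_cube)
    done
qed

lemma DU:
  "((\<lambda>t. K_reg \<mu> \<epsilon> u \<phi> (U + t *\<^sub>R U) \<Phi>) has_real_derivative (1/4) * inner (U - b_KS u) U) (at 0)"
proof -
  have e: "\<And>t. (norm (U + t *\<^sub>R U - b_KS u))^2 = (norm (U - b_KS u))^2 + 2 * t * inner (U - b_KS u) U + t^2 * (norm U)^2"
  proof -
    have e1: "\<And>t. U + t *\<^sub>R U - b_KS u = (U - b_KS u) + t *\<^sub>R U" by (simp add: algebra_simps)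
    show "\<And>t. ?thesis t" unfolding e1 norm_add_sq by (simp add: power_mult_distrib)
  qed
  show ?thesis
    unfolding K_explicit e
    by (auto intro!: derivative_eq_intros)
qed

lemma Dphi:
  fixes u :: "real^4" and \<epsilon> \<phi> \<mu> :: real
  defines "r \<equiv> (norm u)^2" and "P \<equiv> pi_KS u" and "\<rho> \<equiv> 1 + \<epsilon> * cos \<phi>"
  defines "D \<equiv> norm (P + vector [1,0,0])"
  defines "E \<equiv> (1-\<mu>) * r * (1/D + P$1) + \<mu> + 1/2 * r * ((P$1)^2 + (P$2)^2 - (P$3)^2 * \<epsilon> * cos \<phi>) + (1-\<mu>)^2/2 * r"
  assumes rho: "\<rho> \<noteq> 0"
  shows "((\<lambda>t. K_reg \<mu> \<epsilon> u (\<phi> + t) U \<Phi>) has_real_derivative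
     (- (\<epsilon> * sin \<phi> / \<rho>^2) * E - (1/\<rho>) * (1/2 * r * (P$3)^2 * \<epsilon> * sin \<phi>))) (at 0)"
  unfolding K_explicit
  using rho
  apply (auto intro!: derivative_eq_intros simp: r_def[symmetric] P_def[symmetric] D_def[symmetric] \<rho>_def[symmetric])
  apply (simp add: E_def field_simps power2_eq_square)
  done


lemma Dbounds:
  fixes x r D :: real
  assumes D2: "D^2 = 1 + 2*x + r^2" and Dp: "0 < D" and xr: "\<bar>x\<bar> \<le> r" and r1: "r \<le> 1/10"
  shows "1 - r \<le> D" "D \<le> 1 + r"
proof -
  have x1: "x \<le> r" "-r \<le> x" using xr by linarith+
  have e1: "(1+r)^2 = 1 + 2*r + r^2" "(1-r)^2 = 1 - 2*r + r^2" by (simp_all add: power2_eq_square algebra_simps)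
  have h1: "D^2 \<le> (1+r)^2" using x1 e1 D2 by linarith
  show "D \<le> 1 + r" by (rule power2_le_imp_le[OF h1]) (use xr in linarith)
  have h2: "(1-r)^2 \<le> D^2" using x1 e1 D2 by linarith
  show "1 - r \<le> D" by (rule power2_le_imp_le[OF h2]) (use Dp in linarith)
qed
lemma S1:
  fixes x r D :: real
  assumes D2: "D^2 = 1 + 2*x + r^2" and Dp: "0 < D" and xr: "\<bar>x\<bar> \<le> r" and r1: "r \<le> 1/10"
  shows "\<bar>1/D + x - 1\<bar> \<le> 3 * r^2"
proof -
  have r0: "0 \<le> r" using xr by linarith
  have lo: "1 - r \<le> D" and hi: "D \<le> 1 + r" using Dbounds[OF D2 Dp xr r1] by auto
  define N where "N = x*(D-1)*(D+2) - r^2"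
  have a1: "\<bar>D - 1\<bar> \<le> r" using lo hi by linarith
  have a2: "\<bar>D + 2\<bar> \<le> 4" using lo hi r1 r0 by linarith
  have "\<bar>x*(D-1)*(D+2)\<bar> = \<bar>x\<bar>*\<bar>D-1\<bar>*\<bar>D+2\<bar>" by (simp add: abs_mult)
  also have "\<dots> \<le> r*r*4" using a1 a2 xr r0 by (intro mult_mono) (auto simp: abs_mult)
  finally have "\<bar>N\<bar> \<le> 5 * r^2" unfolding N_def by (simp add: power2_eq_square)
  have eqN: "N = (1+D)*(1 - D + x*D)"
    unfolding N_def using D2 by (simp add: power2_eq_square algebra_simps)
  have "N / ((1+D)*D) = (1 - D + x*D) / D"
    unfolding eqN using Dp by simp
  also have "\<dots> = 1/D + x - 1" using Dp by (simp add: field_simps)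
  finally have "1/D + x - 1 = N / ((1+D)*D)" by simp
  have den: "171/100 \<le> (1+D)*D"
  proof -
    have "(19/10)*(9/10) \<le> (1+D)*D" using lo r1 by (intro mult_mono) (auto simp: abs_mult)
    thus ?thesis by simp
  qed
  have "\<bar>N / ((1+D)*D)\<bar> = \<bar>N\<bar> / ((1+D)*D)" using Dp by (simp add: abs_mult)
  also have "\<dots> \<le> (5*r^2) / (171/100)"
    using \<open>\<bar>N\<bar> \<le> 5 * r^2\<close> den by (intro frac_le) auto
  also have "\<dots> \<le> 3 * r^2" by simp
  finally have c: "\<bar>N / ((1+D)*D)\<bar> \<le> 3 * r^2" .
  show ?thesis by (subst \<open>1/D + x - 1 = N / ((1+D)*D)\<close>) (rule c)
qed

lemma S2:
  fixes x r D :: real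
  assumes D2: "D^2 = 1 + 2*x + r^2" and Dp: "0 < D" and xr: "\<bar>x\<bar> \<le> r" and r1: "r \<le> 1/10"
  shows "\<bar>x - (r^2 + x)/D^3\<bar> \<le> 7 * r^2"
proof -
  have r0: "0 \<le> r" using xr by linarith
  have lo: "1 - r \<le> D" and hi: "D \<le> 1 + r" using Dbounds[OF D2 Dp xr r1] by auto
  define N where "N = x*(D-1)*(D^2+D+1) - r^2"
  have a1: "\<bar>D - 1\<bar> \<le> r" using lo hi by linarith
  have "D^2 \<le> (11/10)^2" using hi r1 Dp by (intro power_mono) auto
  hence a2: "\<bar>D^2 + D + 1\<bar> \<le> 4" using lo hi r1 r0 Dp by (simp add: abs_le_iff power2_eq_square) 
  have "\<bar>x*(D-1)*(D^2+D+1)\<bar> = \<bar>x\<bar>*\<bar>D-1\<bar>*\<bar>D^2+D+1\<bar>" by (simp add: abs_mult)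
  also have "\<dots> \<le> r*r*4" using a1 a2 xr r0 by (intro mult_mono) (auto simp: abs_mult)
  finally have Nb: "\<bar>N\<bar> \<le> 5 * r^2" unfolding N_def by (simp add: power2_eq_square)
  have "x - (r^2 + x)/D^3 = N / D^3"
    unfolding N_def using Dp by (simp add: field_simps power2_eq_square power3_eq_cube)
  have den: "(9/10)^3 \<le> D^3" using lo r1 by (intro power_mono) auto
  have "\<bar>N / D^3\<bar> = \<bar>N\<bar> / D^3" using Dp by (simp add: abs_mult)
  also have "\<dots> \<le> (5*r^2) / ((9/10)^3)"
    using Nb den by (intro frac_le) auto
  also have "\<dots> \<le> 7 * r^2" by (simp add: field_simps)
  finally have c: "\<bar>N / D^3\<bar> \<le> 7 * r^2" .
  show ?thesis by (subst \<open>x - (r^2 + x)/D^3 = N / D^3\<close>) (rule c)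
qed


lemma pointwise:
  fixes e \<rho> es ec P1 P2 P3 r m D bb VV Vb uV \<mu> \<Gamma> \<Gamma>0 \<Phi> W' G' :: real
  defines "Q \<equiv> P1^2 + P2^2 - P3^2 * ec"
  defines "E \<equiv> (1-\<mu>) * r * (1/D + P1) + \<mu> + 1/2 * r * Q + (1-\<mu>)^2/2 * r"
  defines "dE \<equiv> (1-\<mu>)*(2*r*(1/D + P1) + r*(-(2*r^2+2*P1)/D^3 + 2*P1)) + 3*r*Q + (1-\<mu>)^2*r"
  defines "C \<equiv> (3 - 4*\<mu> + \<mu>^2) / 2"
  assumes e0: "0 < e" and e1: "e \<le> 1" and erho: "e \<le> \<rho>" and rho2: "\<rho> \<le> 2"
    and es: "\<bar>es\<bar> \<le> 1" and ec: "\<bar>ec\<bar> \<le> 1"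
    and Psq: "P1^2 + P2^2 + P3^2 = r^2" and r0: "0 \<le> r" and rm: "r \<le> m" and m1: "m \<le> 1/10"
    and D2: "D^2 = 1 + 2*P1 + r^2" and Dp: "0 < D"
    and bb0: "0 \<le> bb" and bb: "bb \<le> 4 * r^3" and CS: "Vb^2 \<le> VV * bb" and CS2: "uV^2 \<le> r * VV"
    and VV0: "0 \<le> VV"
    and mu: "\<mu> = m^3"
    and Glo: "\<Gamma>0/2 \<le> \<Gamma>" and Ghi: "\<Gamma> \<le> 3*\<Gamma>0/2" and mG: "m^2 \<le> e^4 * \<Gamma>0 / 10000"
    and K0: "(1/8)*VV - E/\<rho> + \<Phi> * r = 0"
    and Gam: "\<Gamma> = - \<Phi> + C/\<rho>"
    and W'def: "W' = (1/2) * ((1/4) * (VV + Vb) - ((1/8)*(-6*(Vb + bb) + 6*bb) - (1/\<rho>)*dE + 2*\<Phi>*r))"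
    and G'def: "G' = (- (es / \<rho>^2) * E - (1/\<rho>) * (1/2 * r * P3^2 * es)) + C * es * r / \<rho>^2"
  shows "\<bar>G'\<bar> \<le> (2/e) * W'" and "\<bar>uV\<bar> / e \<le> \<Gamma>0 / 8"
proof -
  have rho0: "0 < \<rho>" using e0 erho by linarith
  have r1: "r \<le> 1/10" using rm m1 by linarith
  have P1r: "\<bar>P1\<bar> \<le> r"
  proof -
    have "P1^2 \<le> r^2" using Psq by (smt (verit) zero_le_power2)
    thus ?thesis using r0 by (metis abs_le_square_iff abs_of_nonneg)
  qed
  have P3r: "P3^2 \<le> r^2" using Psq by (smt (verit) zero_le_power2)
  have Qb: "\<bar>Q\<bar> \<le> r^2"
  proof -
    have "\<bar>P3^2 * ec\<bar> \<le> P3^2" using ec by (simp add: abs_mult mult_left_le)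
    thus ?thesis unfolding Q_def using Psq by (smt (verit) zero_le_power2)
  qed
  define B where "B = (1-\<mu>)*(1/D + P1 - 1) + 1/2 * Q"
  define H2 where "H2 = (1-\<mu>)*(P1 - (r^2+P1)/D^3) + Q"
  have mu0: "0 \<le> \<mu>" and mu1: "\<mu> \<le> 1" using mu m1 rm r0 by (auto simp: power_le_one)
  have Bb: "\<bar>B\<bar> \<le> 4 * r^2"
  proof -
    have "\<bar>(1-\<mu>)*(1/D + P1 - 1)\<bar> \<le> 3 * r^2"
      using S1[OF D2 Dp P1r r1] mu0 mu1 by (simp add: abs_mult mult_le_one order_trans[OF mult_left_le_one_le])
    thus ?thesis unfolding B_def using Qb by linarith
  qed
  have H2b: "\<bar>H2\<bar> \<le> 8 * r^2"
  proof -
    have h: "\<bar>(1-\<mu>)*(P1 - (r^2+P1)/D^3)\<bar> \<le> 7 * r^2"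
      using S2[OF D2 Dp P1r r1] mu0 mu1 by (simp add: abs_mult order_trans[OF mult_left_le_one_le])
    have "\<bar>H2\<bar> \<le> \<bar>(1-\<mu>)*(P1 - (r^2+P1)/D^3)\<bar> + \<bar>Q\<bar>" unfolding H2_def by (rule abs_triangle_ineq)
    also have "\<dots> \<le> 7 * r^2 + r^2" using h Qb by (rule add_mono)
    finally show ?thesis by simp
  qed
  have EC: "E - C * r = \<mu> + r * B"
    unfolding E_def C_def B_def using Dp by (simp add: field_simps power2_eq_square)
  have dEE: "dE/2 - E = r * H2 - \<mu>"
    unfolding dE_def E_def H2_def using Dp by (simp add: field_simps power2_eq_square)
  have VVeq: "VV = 8*(\<mu> + r*B)/\<rho> + 8*\<Gamma>*r"
  proof -
    have "VV = 8*(E/\<rho> - \<Phi>*r)" using K0 by argo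
    also have "\<dots> = 8*((E - C*r)/\<rho> + \<Gamma>*r)"
    proof -
      have h: "\<Phi> = C/\<rho> - \<Gamma>" using Gam by argo
      show ?thesis unfolding h using rho0 by (simp add: field_simps)
    qed
    finally show ?thesis unfolding EC by (simp add: add_divide_distrib)
  qed
  have W'eq: "W' = (1/4)*VV + (1/2)*Vb + (r*H2 - \<mu>)/\<rho>"
  proof -
    have h1: "W' = (1/8)*VV + (1/2)*Vb + dE/(2*\<rho>) - \<Phi>*r" unfolding W'def by (simp add: field_simps)
    have h2: "\<Phi>*r = E/\<rho> - (1/8)*VV" using K0 by argo
    have h3: "(dE/2 - E)/\<rho> = dE/(2*\<rho>) - E/\<rho>" using rho0 by (simp add: field_simps)
    have "W' = (1/4)*VV + (1/2)*Vb + (dE/2 - E)/\<rho>" using h1 h2 h3 by argo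
    thus ?thesis unfolding dEE .
  qed
  have G'eq: "G' = - (es/\<rho>^2)*(\<mu> + r*B) - (1/\<rho>)*(1/2 * r * P3^2 * es)"
  proof -
    have "G' = - (es/\<rho>^2)*(E - C*r) - (1/\<rho>)*(1/2 * r * P3^2 * es)"
      unfolding G'def using rho0 by (simp add: field_simps)
    thus ?thesis unfolding EC .
  qed
  have G00: "0 \<le> \<Gamma>0"
  proof -
    have "0 \<le> e^4 * \<Gamma>0 / 10000" using mG zero_le_power2[of m] by linarith
    hence "0 \<le> e^4 * \<Gamma>0" by simp
    thus ?thesis using e0 by (simp add: zero_le_mult_iff)
  qed
  have m0: "0 \<le> m" using r0 rm by linarith
  define Mr where "Mr = \<mu>/\<rho>"
  define Tr where "Tr = r^3/\<rho>"
  define Mr2 where "Mr2 = \<mu>/\<rho>^2"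
  define Tr2 where "Tr2 = r^3/\<rho>^2"
  define GR where "GR = \<Gamma>*r"
  define RB where "RB = r*B/\<rho>"
  define RH where "RH = r*H2/\<rho>"
  have Mr0: "0 \<le> Mr" unfolding Mr_def using mu0 rho0 by simp
  have Tr0: "0 \<le> Tr" unfolding Tr_def using r0 rho0 by simp
  have GR0: "0 \<le> GR" unfolding GR_def using Glo G00 r0 by simp
  have rB: "\<bar>r*B\<bar> \<le> 4*r^3"
  proof -
    have "\<bar>r*B\<bar> = r*\<bar>B\<bar>" using r0 by (simp add: abs_mult)
    also have "\<dots> \<le> r*(4*r^2)" using Bb r0 by (rule mult_left_mono)
    finally show ?thesis by (simp add: power3_eq_cube power2_eq_square)
  qed
  have rH: "\<bar>r*H2\<bar> \<le> 8*r^3"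
  proof -
    have "\<bar>r*H2\<bar> = r*\<bar>H2\<bar>" using r0 by (simp add: abs_mult)
    also have "\<dots> \<le> r*(8*r^2)" using H2b r0 by (rule mult_left_mono)
    finally show ?thesis by (simp add: power3_eq_cube power2_eq_square)
  qed
  have F1: "\<bar>G'\<bar> \<le> Mr2 + 5*Tr2"
  proof -
    have g1: "\<bar>(es/\<rho>^2)*(\<mu> + r*B)\<bar> \<le> Mr2 + 4*Tr2"
    proof -
      have "\<bar>(es/\<rho>^2)*(\<mu> + r*B)\<bar> = \<bar>es\<bar> * \<bar>\<mu> + r*B\<bar> / \<rho>^2" by (simp add: abs_mult)
      also have "\<dots> \<le> 1 * (\<mu> + 4*r^3) / \<rho>^2"
        using es rB mu0 rho0 by (intro divide_right_mono mult_mono) auto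
      also have "\<dots> = Mr2 + 4*Tr2" unfolding Mr2_def Tr2_def by (simp add: add_divide_distrib)
      finally show ?thesis .
    qed
    have g2: "\<bar>(1/\<rho>)*(1/2 * r * P3^2 * es)\<bar> \<le> Tr2"
    proof -
      have "\<bar>(1/\<rho>)*(1/2 * r * P3^2 * es)\<bar> = (1/2 * r * P3^2 * \<bar>es\<bar>)/\<rho>"
        using rho0 r0 by (simp add: abs_mult)
      also have "\<dots> \<le> (1/2 * r * r^2 * 1)/\<rho>"
        using rho0 r0 es P3r by (intro divide_right_mono mult_mono) auto
      also have "\<dots> \<le> r^3/\<rho>^2"
      proof -
        have "(1/2 * r * r^2 * 1)/\<rho> = r^3 * (\<rho>/2) / \<rho>^2" using rho0 by (simp add: field_simps power2_eq_square power3_eq_cube)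
        also have "\<dots> \<le> r^3 * 1 / \<rho>^2" using rho2 r0 rho0 by (intro divide_right_mono mult_left_mono) auto
        finally show ?thesis by simp
      qed
      finally show ?thesis unfolding Tr2_def .
    qed
    have "\<bar>G'\<bar> \<le> \<bar>(es/\<rho>^2)*(\<mu> + r*B)\<bar> + \<bar>(1/\<rho>)*(1/2 * r * P3^2 * es)\<bar>"
    proof -
      have gen: "\<And>x b::real. \<bar>x - b\<bar> \<le> \<bar>-x\<bar> + \<bar>b\<bar>" by arith
      show ?thesis unfolding G'eq using gen[of "- (es/\<rho>^2)*(\<mu>+r*B)" "(1/\<rho>)*(1/2 * r * P3^2 * es)"] by simp
    qed
    thus ?thesis using g1 g2 by linarith
  qed
  have F2: "VV = 8*Mr + 8*RB + 8*GR"
    unfolding VVeq Mr_def RB_def GR_def using rho0 by (simp add: field_simps)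
  have F3: "\<bar>RB\<bar> \<le> 4*Tr"
  proof -
    have "\<bar>r*B/\<rho>\<bar> = \<bar>r*B\<bar>/\<rho>" using rho0 by (simp add: abs_divide)
    also have "\<dots> \<le> (4*r^3)/\<rho>" using rB rho0 by (intro divide_right_mono) auto
    finally show ?thesis unfolding RB_def Tr_def by simp
  qed
  have R3: "r^3 \<le> 2*Tr"
  proof -
    have "r^3 = r^3 * \<rho> / \<rho>" using rho0 by simp
    also have "\<dots> \<le> r^3 * 2 / \<rho>"
    proof -
      have "r^3 * \<rho> \<le> r^3 * 2" using rho2 r0 by (intro mult_left_mono) auto
      thus ?thesis by (rule divide_right_mono) (use rho0 in simp)
    qed
    finally show ?thesis unfolding Tr_def by (simp add: mult.commute)
  qed
  have F4: "\<bar>Vb\<bar> \<le> VV/32 + 32*r^3"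
  proof -
    have "Vb^2 \<le> (VV/32 + 8*bb)^2"
    proof -
      have "VV*bb \<le> (VV/32 + 8*bb)^2"
        using sum_squares_ge_zero[of "VV/32 - 8*bb" 0] by (simp add: power2_eq_square algebra_simps)
      thus ?thesis using CS by linarith
    qed
    hence h: "\<bar>Vb\<bar> \<le> \<bar>VV/32 + 8*bb\<bar>" by (simp only: abs_le_square_iff)
    have "\<bar>VV/32 + 8*bb\<bar> = VV/32 + 8*bb" using VV0 bb0 by simp
    hence "\<bar>Vb\<bar> \<le> VV/32 + 8*bb" using h by simp
    thus ?thesis using bb by linarith
  qed
  have F5: "W' = (1/4)*VV + (1/2)*Vb + RH - Mr"
    unfolding W'eq RH_def Mr_def by (simp add: diff_divide_distrib)
  have F5b: "\<bar>RH\<bar> \<le> 8*Tr"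
  proof -
    have "\<bar>r*H2/\<rho>\<bar> = \<bar>r*H2\<bar>/\<rho>" using rho0 by (simp add: abs_divide)
    also have "\<dots> \<le> (8*r^3)/\<rho>" using rH rho0 by (intro divide_right_mono) auto
    finally show ?thesis unfolding RH_def Tr_def by simp
  qed
  have Gbig: "48 * r^2 / e \<le> \<Gamma>"
  proof -
    have a: "r^2 \<le> m^2" using r0 rm by (rule power_mono[rotated])
    have "e^4 \<le> e^1" using e0 e1 by (intro power_decreasing) auto
    hence b: "e^4 * \<Gamma>0 \<le> e * \<Gamma>0" using G00 by (simp add: mult_right_mono)
    have c: "0 \<le> e * \<Gamma>0" using e0 G00 by simp
    have "48 * r^2 \<le> e * \<Gamma>0 / 2" using a b c mG by linarith
    hence "48 * r^2 / e \<le> (e * \<Gamma>0 / 2) / e" by (rule divide_right_mono) (use e0 in simp)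
    also have "\<dots> = \<Gamma>0/2" using e0 by simp
    finally show ?thesis using Glo by linarith
  qed
  have F6: "48 * Tr \<le> GR"
  proof -
    have "Tr \<le> r^3 / e" unfolding Tr_def by (rule divide_left_mono) (use erho r0 e0 rho0 in auto)
    hence "48 * Tr \<le> 48 * (r^3 / e)" by linarith
    also have "\<dots> = r * (48 * r^2 / e)" by (simp add: power2_eq_square power3_eq_cube)
    also have "\<dots> \<le> r * \<Gamma>" using Gbig r0 by (rule mult_left_mono)
    finally show ?thesis unfolding GR_def by (simp add: mult.commute)
  qed
  have F7: "Mr2 \<le> Mr/e"
  proof -
    have "\<mu>/(\<rho>*\<rho>) \<le> \<mu>/(\<rho>*e)" by (rule divide_left_mono) (use erho mu0 e0 rho0 in auto)
    thus ?thesis unfolding Mr2_def Mr_def by (simp add: power2_eq_square mult.commute)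
  qed
  have F8: "5*Tr2 \<le> GR/e"
  proof -
    have "e^2 \<le> \<rho>^2" using erho e0 by (intro power_mono) auto
    hence "Tr2 \<le> r^3/e^2" unfolding Tr2_def by (rule divide_left_mono) (use r0 e0 rho0 in auto)
    hence "5*Tr2 \<le> 5*(r^3/e^2)" by linarith
    also have "\<dots> = (r * (5*r^2/e))/e" by (simp add: power2_eq_square power3_eq_cube)
    also have "\<dots> \<le> (r*\<Gamma>)/e"
    proof -
      have "5*r^2/e \<le> 48*r^2/e" using e0 by (intro divide_right_mono) auto
      hence "r * (5*r^2/e) \<le> r*\<Gamma>" using Gbig r0 by (intro mult_left_mono) auto
      thus ?thesis by (rule divide_right_mono) (use e0 in simp)
    qed
    finally show ?thesis unfolding GR_def by (simp add: mult.commute)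
  qed
  have Wlow: "W' \<ge> (7/8)*(Mr + GR)"
    using F2 F3 F4 R3 F5 F5b F6 Mr0 GR0 Tr0 abs_ge_minus_self[of RB] abs_ge_minus_self[of Vb] abs_ge_minus_self[of RH] by argo
  show "\<bar>G'\<bar> \<le> (2/e) * W'"
  proof -
    have "\<bar>G'\<bar> \<le> (Mr + GR)/e" using F1 F7 F8 by (simp add: add_divide_distrib)
    also have "\<dots> \<le> (2/e) * ((7/8)*(Mr + GR))" using Mr0 GR0 e0 by (simp add: field_simps)
    also have "\<dots> \<le> (2/e) * W'" using Wlow by (rule mult_left_mono) (use e0 in simp)
    finally show ?thesis .
  qed
  show "\<bar>uV\<bar> / e \<le> \<Gamma>0 / 8"
  proof -
    have m3e: "m^3/\<rho> \<le> m^3/e" by (rule divide_left_mono) (use erho m0 e0 rho0 in auto)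
    have h1: "r*Mr \<le> m^4/e"
    proof -
      have "Mr \<le> m^3/e" unfolding Mr_def mu using m3e .
      hence "r*Mr \<le> m*(m^3/e)" using rm r0 Mr0 by (intro mult_mono) auto
      thus ?thesis by (simp add: power_def)
    qed
    have h2: "r*Tr \<le> m^4/e"
    proof -
      have "r^3 \<le> m^3" using r0 rm by (rule power_mono[rotated])
      hence "r^3/\<rho> \<le> m^3/\<rho>" by (rule divide_right_mono) (use rho0 in simp)
      hence "Tr \<le> m^3/e" unfolding Tr_def using m3e by linarith
      hence "r*Tr \<le> m*(m^3/e)" using rm r0 Tr0 by (intro mult_mono) auto
      thus ?thesis by (simp add: power_def)
    qed
    have h3: "r*GR \<le> (3/2)*(\<Gamma>0*m^2)"
    proof -
      have "r^2 \<le> m^2" using r0 rm by (rule power_mono[rotated])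
      have "r*GR = \<Gamma>*r^2" unfolding GR_def by (simp add: power2_eq_square)
      also have "\<dots> \<le> (3/2*\<Gamma>0)*m^2" using Ghi \<open>r^2 \<le> m^2\<close> Glo G00 by (intro mult_mono) auto
      finally show ?thesis by (simp add: mult.assoc)
    qed
    have h4: "m^4/e \<le> (e^2*\<Gamma>0^2)/10^8"
    proof -
      have "m^4 = (m^2)^2" by simp
      also have "\<dots> \<le> (e^4 * \<Gamma>0 / 10000)^2" using mG by (intro power_mono) auto
      also have "\<dots> = e * (e^7 * \<Gamma>0^2 / 10^8)" by (simp add: power2_eq_square power_def)
      finally have "m^4/e \<le> e * (e^7 * \<Gamma>0^2 / 10^8) / e" by (rule divide_right_mono) (use e0 in simp)
      also have "\<dots> = e^7 * \<Gamma>0^2 / 10^8" using e0 by simp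
      also have "\<dots> \<le> e^2 * \<Gamma>0^2 / 10^8"
      proof -
        have "e^7 \<le> e^2" using e0 e1 by (intro power_decreasing) auto
        thus ?thesis by (intro divide_right_mono mult_right_mono) auto
      qed
      finally show ?thesis .
    qed
    have h5: "\<Gamma>0*m^2 \<le> (e^2*\<Gamma>0^2)/10^4"
    proof -
      have "\<Gamma>0*m^2 \<le> \<Gamma>0*(e^4 * \<Gamma>0 / 10000)" using mG G00 by (rule mult_left_mono)
      also have "\<dots> = e^4 * \<Gamma>0^2 / 10^4" by (simp add: power2_eq_square)
      also have "\<dots> \<le> e^2 * \<Gamma>0^2 / 10^4"
      proof -
        have "e^4 \<le> e^2" using e0 e1 by (intro power_decreasing) auto
        thus ?thesis by (intro divide_right_mono mult_right_mono) auto
      qed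
      finally show ?thesis .
    qed
    have "r*RB \<le> r*(4*Tr)" using F3 r0 by (intro mult_left_mono) auto
    hence rRB: "r*RB \<le> 4*(r*Tr)" by simp
    have "uV^2 \<le> r*VV" using CS2 .
    also have "r*VV = 8*(r*Mr) + 8*(r*RB) + 8*(r*GR)" unfolding F2 by (simp add: algebra_simps)
    finally have "uV^2 \<le> 8*(r*Mr) + 8*(r*RB) + 8*(r*GR)" .
    hence "uV^2 \<le> (e*\<Gamma>0/8)^2"
    proof -
      have eq: "(e*\<Gamma>0/8)^2 = (e^2*\<Gamma>0^2)/64" by (simp add: power_mult_distrib power_divide)
      have X0: "0 \<le> e^2*\<Gamma>0^2" by simp
      have n: "(10::real)^8 = 100000000" "(10::real)^4 = 10000" by simp_all
      have lin: "\<And>a b c t U X Z Y :: real. U \<le> 8*a + 8*b + 8*c \<Longrightarrow> a \<le> Z \<Longrightarrow> t \<le> Z \<Longrightarrow> c \<le> 3/2*Y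
         \<Longrightarrow> Z \<le> X/10^8 \<Longrightarrow> Y \<le> X/10^4 \<Longrightarrow> b \<le> 4*t \<Longrightarrow> 0 \<le> X \<Longrightarrow> U \<le> X/64" by simp
      show ?thesis unfolding eq by (rule lin[OF \<open>uV^2 \<le> 8*(r*Mr) + 8*(r*RB) + 8*(r*GR)\<close> h1 h2 h3 h4 h5 rRB X0])
    qed
    hence "\<bar>uV\<bar> \<le> \<bar>e*\<Gamma>0/8\<bar>" by (simp only: abs_le_square_iff)
    hence "\<bar>uV\<bar> \<le> e*\<Gamma>0/8" using e0 G00 by simp
    hence "\<bar>uV\<bar>/e \<le> (e*\<Gamma>0/8)/e" by (rule divide_right_mono) (use e0 in simp)
    thus ?thesis using e0 by simp
  qed
qed


lemma mono_from_deriv: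
  fixes F F' :: "real \<Rightarrow> real"
  assumes "a \<le> t" "continuous_on {a..t} F"
    "\<And>s. a < s \<Longrightarrow> s < t \<Longrightarrow> (F has_real_derivative F' s) (at s) \<and> 0 \<le> F' s"
  shows "F a \<le> F t"
  using assms by (intro DERIV_nonneg_imp_increasing_open[of a t F]) blast+

lemma bootstrap:
  fixes \<Gamma> w \<Gamma>' w' :: "real \<Rightarrow> real" and a b \<Gamma>0 M :: real
  assumes ab: "a < b" and G0: "0 < \<Gamma>0" and Ga: "\<Gamma> a = \<Gamma>0" and M0: "0 \<le> M"
    and cG: "continuous_on {a..b} \<Gamma>" and cw: "continuous_on {a..b} w"
    and dG: "\<And>s. a < s \<Longrightarrow> s < b \<Longrightarrow> (\<Gamma> has_real_derivative \<Gamma>' s) (at s)"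
    and dw: "\<And>s. a < s \<Longrightarrow> s < b \<Longrightarrow> (w has_real_derivative w' s) (at s)"
    and pw: "\<And>s. s \<in> {a..b} \<Longrightarrow> \<Gamma> s \<in> {\<Gamma>0/2..3*\<Gamma>0/2} \<Longrightarrow> \<bar>\<Gamma>' s\<bar> \<le> M * w' s \<and> M * \<bar>w s\<bar> \<le> \<Gamma>0/8"
  shows "\<forall>s\<in>{a..b}. \<Gamma> s \<in> {\<Gamma>0/2..3*\<Gamma>0/2}"
proof (rule ccontr)
  assume "\<not> ?thesis"
  then obtain s0 where s0: "s0 \<in> {a..b}" "\<Gamma> s0 \<notin> {\<Gamma>0/2..3*\<Gamma>0/2}" by blast
  define T where "T = {a..b} \<inter> \<Gamma> -` (- {\<Gamma>0/2<..<3*\<Gamma>0/2})"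
  have clT: "closed T" unfolding T_def
    by (rule continuous_closed_preimage[OF cG]) auto
  have s0T: "s0 \<in> T" using s0 unfolding T_def by auto
  have bdd: "bdd_below T" unfolding T_def by (rule bdd_belowI[of _ a]) auto
  define t where "t = Inf T"
  have tT: "t \<in> T" unfolding t_def using closed_contains_Inf[OF _ bdd clT] s0T by blast
  have ta: "a \<le> t" "t \<le> b" using tT unfolding T_def by auto
  have before: "\<And>s. a \<le> s \<Longrightarrow> s < t \<Longrightarrow> \<Gamma> s \<in> {\<Gamma>0/2<..<3*\<Gamma>0/2}"
  proof -
    fix s assume "a \<le> s" "s < t"
    hence "s \<notin> T" unfolding t_def using cInf_lower[OF _ bdd] by force
    thus "\<Gamma> s \<in> {\<Gamma>0/2<..<3*\<Gamma>0/2}" using \<open>a \<le> s\<close> \<open>s < t\<close> ta unfolding T_def by auto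
  qed
  have Gt_out: "\<Gamma> t \<le> \<Gamma>0/2 \<or> 3*\<Gamma>0/2 \<le> \<Gamma> t" using tT unfolding T_def by auto
  have tnea: "t \<noteq> a" using Gt_out Ga G0 by auto
  hence at: "a < t" using ta by simp
  have cGt: "continuous_on {a..t} \<Gamma>" by (rule continuous_on_subset[OF cG]) (use ta in auto)
  have cwt: "continuous_on {a..t} w" by (rule continuous_on_subset[OF cw]) (use ta in auto)
  have Gt_in: "\<Gamma> t \<in> {\<Gamma>0/2..3*\<Gamma>0/2}"
  proof (cases "3*\<Gamma>0/2 \<le> \<Gamma> t")
    case True
    obtain x where x: "x \<in> {a..t}" "\<Gamma> x = 3*\<Gamma>0/2"
      using IVT'[of \<Gamma> a "3*\<Gamma>0/2" t] True Ga G0 at cGt by auto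
    have "x \<in> T" using x ta unfolding T_def by auto
    hence "t \<le> x" unfolding t_def by (rule cInf_lower[OF _ bdd])
    hence "x = t" using x by auto
    thus ?thesis using x G0 by auto
  next
    case False
    hence F: "\<Gamma> t \<le> \<Gamma>0/2" using Gt_out by auto
    obtain x where x: "x \<in> {a..t}" "\<Gamma> x = \<Gamma>0/2"
      using IVT2'[of \<Gamma> t "\<Gamma>0/2" a] F Ga G0 at cGt by auto
    have "x \<in> T" using x ta unfolding T_def by auto
    hence "t \<le> x" unfolding t_def by (rule cInf_lower[OF _ bdd])
    hence "x = t" using x by auto
    thus ?thesis using x G0 by auto
  qed
  have inside: "\<And>s. a \<le> s \<Longrightarrow> s \<le> t \<Longrightarrow> \<Gamma> s \<in> {\<Gamma>0/2..3*\<Gamma>0/2}"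
  proof -
    fix s assume "a \<le> s" "s \<le> t"
    thus "\<Gamma> s \<in> {\<Gamma>0/2..3*\<Gamma>0/2}" using before[of s] Gt_in by (cases "s = t") auto
  qed
  have up: "(\<lambda>s. \<Gamma> s + M * w s) a \<le> (\<lambda>s. \<Gamma> s + M * w s) t"
  proof (rule mono_from_deriv[where F = "\<lambda>s. \<Gamma> s + M * w s" and F' = "\<lambda>s. \<Gamma>' s + M * w' s"])
    show "a \<le> t" using at by simp
    show "continuous_on {a..t} (\<lambda>s. \<Gamma> s + M * w s)" using cGt cwt by (intro continuous_intros)
    fix s assume s: "a < s" "s < t"
    have "\<bar>\<Gamma>' s\<bar> \<le> M * w' s" using pw[of s] inside[of s] s ta by auto
    moreover have "((\<lambda>s. \<Gamma> s + M * w s) has_real_derivative \<Gamma>' s + M * w' s) (at s)"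
      using dG[of s] dw[of s] s ta by (auto intro!: derivative_eq_intros)
    ultimately show "((\<lambda>s. \<Gamma> s + M * w s) has_real_derivative \<Gamma>' s + M * w' s) (at s) \<and> 0 \<le> \<Gamma>' s + M * w' s"
      by auto
  qed
  have down: "(\<lambda>s. M * w s - \<Gamma> s) a \<le> (\<lambda>s. M * w s - \<Gamma> s) t"
  proof (rule mono_from_deriv[where F = "\<lambda>s. M * w s - \<Gamma> s" and F' = "\<lambda>s. M * w' s - \<Gamma>' s"])
    show "a \<le> t" using at by simp
    show "continuous_on {a..t} (\<lambda>s. M * w s - \<Gamma> s)" using cGt cwt by (intro continuous_intros)
    fix s assume s: "a < s" "s < t"
    have "\<bar>\<Gamma>' s\<bar> \<le> M * w' s" using pw[of s] inside[of s] s ta by auto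
    moreover have "((\<lambda>s. M * w s - \<Gamma> s) has_real_derivative M * w' s - \<Gamma>' s) (at s)"
      using dG[of s] dw[of s] s ta by (auto intro!: derivative_eq_intros)
    ultimately show "((\<lambda>s. M * w s - \<Gamma> s) has_real_derivative M * w' s - \<Gamma>' s) (at s) \<and> 0 \<le> M * w' s - \<Gamma>' s"
      by auto
  qed
  have wa: "M * \<bar>w a\<bar> \<le> \<Gamma>0/8" using pw[of a] ab Ga G0 by auto
  have wt: "M * \<bar>w t\<bar> \<le> \<Gamma>0/8" using pw[of t] ta at Gt_in by auto
  have h: "\<bar>M * w a\<bar> \<le> \<Gamma>0/8" "\<bar>M * w t\<bar> \<le> \<Gamma>0/8" using wa wt M0 by (simp_all add: abs_mult)
  have "\<Gamma>0/2 < \<Gamma> t" "\<Gamma> t < 3*\<Gamma>0/2"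
    using up down Ga G0 h abs_ge_self[of "M*w a"] abs_ge_minus_self[of "M*w a"] abs_ge_self[of "M * w t"] abs_ge_minus_self[of "M*w t"]
    by simp_all
  hence "\<Gamma> t \<in> {\<Gamma>0/2<..<3*\<Gamma>0/2}" by simp
  thus False using tT unfolding T_def by auto
qed


lemma vd_fst: "(f has_vector_derivative f') F \<Longrightarrow> ((\<lambda>x. fst (f x)) has_vector_derivative fst f') F"
  unfolding has_vector_derivative_def by (drule has_derivative_fst) simp

lemma vd_snd: "(f has_vector_derivative f') F \<Longrightarrow> ((\<lambda>x. snd (f x)) has_vector_derivative snd f') F"
  unfolding has_vector_derivative_def by (drule has_derivative_snd) simp

lemma D3_K:
  fixes u :: "real^4" and \<mu> \<epsilon> \<phi> \<Phi> :: real
  defines "r \<equiv> (norm u)^2" and "P \<equiv> pi_KS u" and "b \<equiv> b_KS u" and "\<rho> \<equiv> 1 + \<epsilon> * cos \<phi>"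
  defines "D \<equiv> norm (P + vector [1,0,0])"
  defines "Q \<equiv> (P $ 1)^2 + (P $ 2)^2 - (P $ 3)^2 * \<epsilon> * cos \<phi>"
  assumes pos: "0 < r^2 + 2*(P$1) + 1" and rho: "\<rho> \<noteq> 0"
  shows "((\<lambda>t. K_reg \<mu> \<epsilon> (u + t *\<^sub>R u) \<phi> U \<Phi>) has_real_derivative
    ((1/8)*(-6*inner U b + 6*(norm b)^2) - 1/\<rho>*((1-\<mu>)*(2*r*(1/D + P$1) + r*(-(2*r^2+2*(P$1))/D^3 + 2*(P$1))) + 3*r*Q + (1-\<mu>)^2*r) + 2*\<Phi>*r)) (at 0)"
proof -
  have Deq: "D = sqrt (r^2 + 2*(P$1) + 1)"
  proof -
    have "D^2 = r^2 + 2*(P$1) + 1" unfolding D_def norm_e_sq P_def r_def norm_pi by simp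
    thus ?thesis by (metis D_def norm_ge_zero real_sqrt_unique)
  qed
  have e: "\<And>t. K_reg \<mu> \<epsilon> (u + t *\<^sub>R u) \<phi> U \<Phi> = (1/8) * ((norm U)^2 - 2 * (1+t)^3 * inner U b + ((1+t)^3)^2 * (norm b)^2) - 1/\<rho> *
   ((1-\<mu>) * ((1+t)^2 * r) * (1 / sqrt (((1+t)^2)^2 * r^2 + 2 * ((1+t)^2 * (P$1)) + 1) + (1+t)^2 * (P$1)) + \<mu>
    + 1/2 * ((1+t)^2 * r) * (((1+t)^2)^2 * Q)
    + (1-\<mu>)^2/2 * ((1+t)^2 * r)) + \<Phi> * ((1+t)^2 * r)"
  proof -
    fix t
    have "u + t *\<^sub>R u = (1+t) *\<^sub>R u" by (simp add: algebra_simps)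
    thus "?thesis t" unfolding r_def P_def b_def \<rho>_def Q_def by (simp only: K_scale_u)
  qed
  show ?thesis unfolding e Deq by (rule D3_scalar[OF pos rho])
qed

lemma core:
  fixes \<mu> \<epsilon> s1 s2 \<Gamma>0 m :: real and u U :: "real \<Rightarrow> real^4" and \<phi> \<Phi> :: "real \<Rightarrow> real"
  assumes m3: "m^3 = \<mu>" and m0: "0 \<le> m" and m1: "m \<le> 1/10"
    and eps0: "0 < \<epsilon>" and eps1: "\<epsilon> < 1" and s12: "s1 < s2"
    and ham: "hamiltonian_solution (K_ham \<mu> \<epsilon>) (\<lambda>s. (u s, \<phi> s)) (\<lambda>s. (U s, \<Phi> s)) {s1..s2}"
    and K0: "\<forall>s\<in>{s1..s2}. K_reg \<mu> \<epsilon> (u s) (\<phi> s) (U s) (\<Phi> s) = 0"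
    and phid: "\<forall>s\<in>{s1..s2}. (\<phi> has_real_derivative (norm (u s))^2) (at s within {s1..s2})"
    and rb: "\<forall>s\<in>{s1..s2}. (norm (u s))^2 \<le> m"
    and G0def: "\<Gamma>0 = Gamma_fn \<mu> \<epsilon> (\<phi> s1) (\<Phi> s1)" and G0: "0 < \<Gamma>0"
    and small: "m^2 \<le> (1-\<epsilon>)^4 * \<Gamma>0 / 10000"
  shows "\<forall>s\<in>{s1..s2}. Gamma_fn \<mu> \<epsilon> (\<phi> s) (\<Phi> s) \<in> {\<Gamma>0/2..3*\<Gamma>0/2}"
proof -
  define S where "S = {s1..s2}"
  define e where "e = 1 - \<epsilon>"
  have e0: "0 < e" and e1: "e \<le> 1" using eps0 eps1 by (auto simp: e_def)
  define Pr where "Pr t dx dp \<longleftrightarrow>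
        ((\<lambda>s. (u s, \<phi> s)) has_vector_derivative dx) (at t within S) \<and>
        ((\<lambda>s. (U s, \<Phi> s)) has_vector_derivative dp) (at t within S) \<and>
        ((\<lambda>y. K_ham \<mu> \<epsilon> t (u t, \<phi> t) y) has_derivative (\<lambda>h. dx \<bullet> h)) (at (U t, \<Phi> t)) \<and>
        ((\<lambda>y. K_ham \<mu> \<epsilon> t y (U t, \<Phi> t)) has_derivative (\<lambda>h. - (dp \<bullet> h))) (at (u t, \<phi> t))" for t dx dp
  have ex: "\<exists>dx dp. Pr t dx dp" if "t \<in> S" for t
    using ham that unfolding hamiltonian_solution_def Pr_def S_def by blast
  define DX where "DX t = (SOME dx. \<exists>dp. Pr t dx dp)" for t
  define DP where "DP t = (SOME dp. Pr t (DX t) dp)" for t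
  have H: "Pr t (DX t) (DP t)" if "t \<in> S" for t
  proof -
    have "\<exists>dp. Pr t (DX t) dp" unfolding DX_def by (rule someI_ex) (rule ex[OF that])
    thus ?thesis unfolding DP_def by (rule someI_ex)
  qed
  define du where "du s = fst (DX s)" for s
  define dU where "dU s = fst (DP s)" for s
  define d\<Phi> where "d\<Phi> s = snd (DP s)" for s
  have du: "\<And>s. s \<in> S \<Longrightarrow> (u has_vector_derivative du s) (at s within S)"
    unfolding du_def using H vd_fst unfolding Pr_def by fastforce
  have dU: "\<And>s. s \<in> S \<Longrightarrow> (U has_vector_derivative dU s) (at s within S)"
    unfolding dU_def using H vd_fst unfolding Pr_def by fastforce
  have dPhi: "\<And>s. s \<in> S \<Longrightarrow> (\<Phi> has_real_derivative d\<Phi> s) (at s within S)"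
    unfolding d\<Phi>_def has_real_derivative_iff_has_vector_derivative using H vd_snd unfolding Pr_def by fastforce
  define C where "C = (3 - 4*\<mu> + \<mu>^2) / 2"
  define \<rho> where "\<rho> s = 1 + \<epsilon> * cos (\<phi> s)" for s
  have rho_lo: "e \<le> \<rho> s" for s
  proof -
    have "- 1 \<le> cos (\<phi> s)" by simp
    hence "- \<epsilon> \<le> \<epsilon> * cos (\<phi> s)" using eps0 by (metis mult.right_neutral mult_left_mono less_imp_le mult_minus_right)
    thus ?thesis unfolding e_def \<rho>_def by linarith
  qed
  have rho_hi: "\<rho> s \<le> 2" for s
  proof -
    have "\<epsilon> * cos (\<phi> s) \<le> \<epsilon> * 1" using eps0 by (intro mult_left_mono) auto
    thus ?thesis unfolding \<rho>_def using eps1 by linarith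
  qed
  have rho0: "0 < \<rho> s" for s using rho_lo[of s] e0 by linarith
  define \<Gamma> where "\<Gamma> s = Gamma_fn \<mu> \<epsilon> (\<phi> s) (\<Phi> s)" for s
  define w where "w s = 1/2 * inner (u s) (U s)" for s
  define \<Gamma>' where "\<Gamma>' s = - d\<Phi> s + C * (\<epsilon> * sin (\<phi> s)) * (norm (u s))^2 / (\<rho> s)^2" for s
  define w' where "w' s = 1/2 * (inner (du s) (U s) + inner (u s) (dU s))" for s
  have dG: "(\<Gamma> has_real_derivative \<Gamma>' s) (at s within S)" if sS: "s \<in> S" for s
  proof -
    have ph: "(\<phi> has_real_derivative (norm (u s))^2) (at s within S)" using phid sS unfolding S_def by blast
    have eq: "\<Gamma> = (\<lambda>s. - \<Phi> s + (3 - 4*\<mu> + \<mu>^2) / (2 * (1 + \<epsilon> * cos (\<phi> s))))"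
      unfolding \<Gamma>_def Gamma_fn_def by simp
    have nz: "1 + \<epsilon> * cos (\<phi> s) \<noteq> 0" using rho0[of s] unfolding \<rho>_def by simp
    have g: "((\<lambda>s. 1 + \<epsilon> * cos (\<phi> s)) has_real_derivative (- (\<epsilon> * sin (\<phi> s)) * (norm (u s))^2)) (at s within S)"
      by (auto intro!: derivative_eq_intros ph)
    have gi: "((\<lambda>s. inverse (1 + \<epsilon> * cos (\<phi> s))) has_real_derivative
        (- ((- (\<epsilon> * sin (\<phi> s)) * (norm (u s))^2) * inverse ((1 + \<epsilon> * cos (\<phi> s))^Suc (Suc 0))))) (at s within S)"
      by (rule DERIV_inverse_fun[OF g nz])
    have gc: "((\<lambda>s. C * inverse (1 + \<epsilon> * cos (\<phi> s))) has_real_derivative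
        C * (- ((- (\<epsilon> * sin (\<phi> s)) * (norm (u s))^2) * inverse ((1 + \<epsilon> * cos (\<phi> s))^Suc (Suc 0))))) (at s within S)"
      by (rule DERIV_cmult[OF gi])
    have eq2: "\<Gamma> = (\<lambda>s. - \<Phi> s + C * inverse (1 + \<epsilon> * cos (\<phi> s)))"
      unfolding eq C_def by (simp add: field_simps)
    have "((\<lambda>s. - \<Phi> s + C * inverse (1 + \<epsilon> * cos (\<phi> s))) has_real_derivative
        - d\<Phi> s + C * (- ((- (\<epsilon> * sin (\<phi> s)) * (norm (u s))^2) * inverse ((1 + \<epsilon> * cos (\<phi> s))^Suc (Suc 0))))) (at s within S)"
      by (intro DERIV_add DERIV_minus dPhi[OF sS] gc)
    moreover have "- d\<Phi> s + C * (- ((- (\<epsilon> * sin (\<phi> s)) * (norm (u s))^2) * inverse ((1 + \<epsilon> * cos (\<phi> s))^Suc (Suc 0)))) = \<Gamma>' s"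
      unfolding \<Gamma>'_def \<rho>_def by (simp add: field_simps power2_eq_square)
    ultimately show ?thesis unfolding eq2 by simp
  qed
  have dw: "(w has_real_derivative w' s) (at s within S)" if sS: "s \<in> S" for s
  proof -
    have a: "(u has_derivative (\<lambda>x. x *\<^sub>R du s)) (at s within S)" using du[OF sS] unfolding has_vector_derivative_def .
    have b: "(U has_derivative (\<lambda>x. x *\<^sub>R dU s)) (at s within S)" using dU[OF sS] unfolding has_vector_derivative_def .
    have "(w has_derivative (\<lambda>h. 1/2 * (inner (u s) (h *\<^sub>R dU s) + inner (h *\<^sub>R du s) (U s)))) (at s within S)"
      unfolding w_def by (intro derivative_intros a b)
    moreover have "(\<lambda>h. 1/2 * (inner (u s) (h *\<^sub>R dU s) + inner (h *\<^sub>R du s) (U s))) = (*) (w' s)"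
      unfolding w'_def by (rule ext) (simp add: algebra_simps inner_commute)
    ultimately show ?thesis unfolding has_field_derivative_def by simp
  qed
  have pw: "\<bar>\<Gamma>' s\<bar> \<le> (2/e) * w' s \<and> (2/e) * \<bar>w s\<bar> \<le> \<Gamma>0/8"
    if sS: "s \<in> S" and Gs: "\<Gamma> s \<in> {\<Gamma>0/2..3*\<Gamma>0/2}" for s
  proof -
    define us where "us = u s"
    define Us where "Us = U s"
    define ph where "ph = \<phi> s"
    define P where "P = pi_KS us"
    define b where "b = b_KS us"
    define r where "r = (norm us)^2"
    define D where "D = norm (P + vector [1,0,0])"
    define Q where "Q = (P $ 1)^2 + (P $ 2)^2 - (P $ 3)^2 * \<epsilon> * cos ph"
    define E where "E = (1-\<mu>) * r * (1/D + P$1) + \<mu> + 1/2 * r * ((P$1)^2 + (P$2)^2 - (P$3)^2 * \<epsilon> * cos ph) + (1-\<mu>)^2/2 * r"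
    define dE where "dE = (1-\<mu>)*(2*r*(1/D + P$1) + r*(-(2*r^2+2*(P$1))/D^3 + 2*(P$1))) + 3*r*Q + (1-\<mu>)^2*r"
    define VV where "VV = (norm (Us - b))^2"
    define Vb where "Vb = inner (Us - b) b"
    define uV where "uV = inner us (Us - b)"
    define bb where "bb = (norm b)^2"
    have r0: "0 \<le> r" unfolding r_def by simp
    have rm: "r \<le> m" using rb sS unfolding r_def us_def S_def by blast
    have normP: "norm P = r" unfolding P_def r_def by (rule norm_pi)
    have Psq: "(P$1)^2 + (P$2)^2 + (P$3)^2 = r^2" using normP norm3_sq[of P] by simp
    have P1r: "\<bar>P$1\<bar> \<le> r" using component_le_norm_cart[of P 1] normP by simp
    have D2: "D^2 = 1 + 2*(P$1) + r^2" unfolding D_def norm_e_sq normP by simp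
    have Dp: "0 < D"
    proof -
      have "0 < 1 + 2*(P$1) + r^2" using P1r rm m1 r0 zero_le_power2[of r] abs_ge_minus_self[of "P$1"] by linarith
      hence "D \<noteq> 0" using D2 by auto
      thus ?thesis unfolding D_def by simp
    qed
    have bbb: "bb \<le> 4 * r^3" unfolding bb_def r_def b_def by (rule norm_b_le)
    have CS: "Vb^2 \<le> VV * bb" unfolding Vb_def VV_def bb_def power2_norm_eq_inner
      by (rule Cauchy_Schwarz_ineq)
    have CS2: "uV^2 \<le> r * VV" unfolding uV_def VV_def r_def power2_norm_eq_inner
      by (rule Cauchy_Schwarz_ineq)
    have nz: "\<rho> s \<noteq> 0" using rho0[of s] by simp
    have KK: "(1/8)*VV - E/\<rho> s + \<Phi> s * r = 0"
      using K0 sS unfolding S_def K_explicit VV_def E_def \<rho>_def us_def Us_def ph_def P_def b_def r_def D_def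
      by simp
    have Gam: "\<Gamma> s = - \<Phi> s + C/\<rho> s" unfolding \<Gamma>_def Gamma_fn_def C_def \<rho>_def by simp
    have Hs: "Pr s (DX s) (DP s)" by (rule H[OF sS])
    have I1: "inner (du s) Us = 1/4 * inner (Us - b) Us"
    proof -
      have "(\<lambda>h. DX s \<bullet> h) (Us, 0) = 1/4 * inner (Us - b) Us"
      proof (rule dir_deriv[where F = "\<lambda>y. K_ham \<mu> \<epsilon> s (u s, \<phi> s) y" and L = "\<lambda>h. DX s \<bullet> h" and x = "(Us, \<Phi> s)" and v = "(Us, 0)"])
        show "((\<lambda>y. K_ham \<mu> \<epsilon> s (u s, \<phi> s) y) has_derivative (\<lambda>h. DX s \<bullet> h)) (at (Us, \<Phi> s))"
          using Hs unfolding Pr_def Us_def by blast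
        have "(\<lambda>t. K_ham \<mu> \<epsilon> s (u s, \<phi> s) ((Us, \<Phi> s) + t *\<^sub>R (Us, 0))) = (\<lambda>t. K_reg \<mu> \<epsilon> us ph (Us + t *\<^sub>R Us) (\<Phi> s))"
          unfolding K_ham_def us_def ph_def by simp
        thus "((\<lambda>t. K_ham \<mu> \<epsilon> s (u s, \<phi> s) ((Us, \<Phi> s) + t *\<^sub>R (Us, 0))) has_real_derivative 1/4 * inner (Us - b) Us) (at 0)"
          unfolding b_def using DU by simp
      qed
      thus ?thesis unfolding du_def by (simp add: inner_Pair_0)
    qed
    define d3 where "d3 = (1/8)*(-6*inner Us b + 6*(norm b)^2) - 1/\<rho> s*((1-\<mu>)*(2*r*(1/D + P$1) + r*(-(2*r^2+2*(P$1))/D^3 + 2*(P$1))) + 3*r*Q + (1-\<mu>)^2*r) + 2*\<Phi> s*r"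
    have I2: "inner us (dU s) = - d3"
    proof -
      have "(\<lambda>h. - (DP s \<bullet> h)) (us, 0) = d3"
      proof (rule dir_deriv[where F = "\<lambda>y. K_ham \<mu> \<epsilon> s y (U s, \<Phi> s)" and L = "\<lambda>h. - (DP s \<bullet> h)" and x = "(us, \<phi> s)" and v = "(us, 0)"])
        show "((\<lambda>y. K_ham \<mu> \<epsilon> s y (U s, \<Phi> s)) has_derivative (\<lambda>h. - (DP s \<bullet> h))) (at (us, \<phi> s))"
          using Hs unfolding Pr_def us_def by blast
        have "(\<lambda>t. K_ham \<mu> \<epsilon> s ((us, \<phi> s) + t *\<^sub>R (us, 0)) (U s, \<Phi> s)) = (\<lambda>t. K_reg \<mu> \<epsilon> (us + t *\<^sub>R us) ph Us (\<Phi> s))"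
          unfolding K_ham_def Us_def ph_def by simp
        moreover have "((\<lambda>t. K_reg \<mu> \<epsilon> (us + t *\<^sub>R us) ph Us (\<Phi> s)) has_real_derivative d3) (at 0)"
        proof -
          have pos: "0 < r^2 + 2*(P$1) + 1" using D2 Dp by (metis add.commute add.left_commute zero_less_power2 less_irrefl)
          show ?thesis unfolding d3_def \<rho>_def ph_def[symmetric] Q_def D_def r_def P_def b_def
            by (rule D3_K) (use pos nz in \<open>simp_all add: r_def P_def \<rho>_def ph_def\<close>)
        qed
        ultimately show "((\<lambda>t. K_ham \<mu> \<epsilon> s ((us, \<phi> s) + t *\<^sub>R (us, 0)) (U s, \<Phi> s)) has_real_derivative d3) (at 0)"
          by simp
      qed
      thus ?thesis unfolding dU_def by (simp add: inner_Pair_0 inner_commute)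
    qed
    define d2 where "d2 = - (\<epsilon> * sin ph / (\<rho> s)^2) * E - (1/\<rho> s) * (1/2 * r * (P$3)^2 * \<epsilon> * sin ph)"
    have I3: "- d\<Phi> s = d2"
    proof -
      have "(\<lambda>h. - (DP s \<bullet> h)) (0, 1) = d2"
      proof (rule dir_deriv[where F = "\<lambda>y. K_ham \<mu> \<epsilon> s y (U s, \<Phi> s)" and L = "\<lambda>h. - (DP s \<bullet> h)" and x = "(us, \<phi> s)" and v = "(0, 1)"])
        show "((\<lambda>y. K_ham \<mu> \<epsilon> s y (U s, \<Phi> s)) has_derivative (\<lambda>h. - (DP s \<bullet> h))) (at (us, \<phi> s))"
          using Hs unfolding Pr_def us_def by blast
        have "(\<lambda>t. K_ham \<mu> \<epsilon> s ((us, \<phi> s) + t *\<^sub>R (0, 1)) (U s, \<Phi> s)) = (\<lambda>t. K_reg \<mu> \<epsilon> us (ph + t) Us (\<Phi> s))"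
          unfolding K_ham_def Us_def ph_def by simp
        moreover have "((\<lambda>t. K_reg \<mu> \<epsilon> us (ph + t) Us (\<Phi> s)) has_real_derivative d2) (at 0)"
          unfolding d2_def E_def \<rho>_def ph_def[symmetric] r_def P_def D_def
          by (rule Dphi) (use nz in \<open>simp add: \<rho>_def ph_def\<close>)
        ultimately show "((\<lambda>t. K_ham \<mu> \<epsilon> s ((us, \<phi> s) + t *\<^sub>R (0, 1)) (U s, \<Phi> s)) has_real_derivative d2) (at 0)"
          by simp
      qed
      thus ?thesis unfolding d\<Phi>_def by (simp add: inner_Pair_0)
    qed
    have ub: "inner us b = 0" unfolding b_def by (rule u_b)
    have UU: "inner (Us - b) Us = VV + Vb" unfolding VV_def Vb_def power2_norm_eq_inner
      by (simp add: inner_diff_left inner_diff_right inner_commute)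
    have Ub: "inner Us b = Vb + bb" unfolding Vb_def bb_def power2_norm_eq_inner
      by (simp add: inner_diff_left)
    have W'def: "w' s = (1/2) * ((1/4) * (VV + Vb) - ((1/8)*(-6*(Vb + bb) + 6*bb) - (1/\<rho> s)*dE + 2*\<Phi> s*r))"
      unfolding w'_def us_def[symmetric] Us_def[symmetric] I1 UU I2 d3_def Ub dE_def bb_def by simp
    have G'def: "\<Gamma>' s = (- ((\<epsilon> * sin ph) / (\<rho> s)^2) * E - (1/\<rho> s) * (1/2 * r * (P$3)^2 * (\<epsilon> * sin ph))) + C * (\<epsilon> * sin ph) * r / (\<rho> s)^2"
    proof -
      have "\<Gamma>' s = - d\<Phi> s + C * (\<epsilon> * sin ph) * r / (\<rho> s)^2" unfolding \<Gamma>'_def ph_def r_def us_def ..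
      thus ?thesis unfolding I3 d2_def by (simp add: mult.assoc)
    qed
    have es: "\<bar>\<epsilon> * sin ph\<bar> \<le> 1" using eps0 eps1 abs_sin_le_one[of ph] by (simp add: abs_mult mult_le_one)
    have ec: "\<bar>\<epsilon> * cos ph\<bar> \<le> 1" using eps0 eps1 abs_cos_le_one[of ph] by (simp add: abs_mult mult_le_one)
    have Gs': "\<Gamma>0/2 \<le> \<Gamma> s" "\<Gamma> s \<le> 3*\<Gamma>0/2" using Gs by auto
    have Qeq: "Q = (P$1)^2 + (P$2)^2 - (P$3)^2 * (\<epsilon> * cos ph)" unfolding Q_def by (simp add: mult.assoc)
    have Eeq: "E = (1-\<mu>) * r * (1/D + P$1) + \<mu> + 1/2 * r * ((P$1)^2 + (P$2)^2 - (P$3)^2 * (\<epsilon> * cos ph)) + (1-\<mu>)^2/2 * r"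
      unfolding E_def by (simp add: mult.assoc)
    have dEeq: "dE = (1-\<mu>)*(2*r*(1/D + P$1) + r*(-(2*r^2+2*(P$1))/D^3 + 2*(P$1))) + 3*r*((P$1)^2 + (P$2)^2 - (P$3)^2 * (\<epsilon> * cos ph)) + (1-\<mu>)^2*r"
      unfolding dE_def Qeq ..
    have mu: "\<mu> = m^3" using m3 by simp
    have smalle: "m^2 \<le> e^4 * \<Gamma>0 / 10000" using small unfolding e_def .
    have bb0: "0 \<le> bb" unfolding bb_def by simp
    have VV0: "0 \<le> VV" unfolding VV_def by simp
    have KK': "(1/8)*VV - ((1-\<mu>) * r * (1/D + P$1) + \<mu> + 1/2 * r * ((P$1)^2 + (P$2)^2 - (P$3)^2 * (\<epsilon> * cos ph)) + (1-\<mu>)^2/2 * r)/\<rho> s + \<Phi> s * r = 0"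
      using KK unfolding Eeq .
    have Gam': "\<Gamma> s = - \<Phi> s + ((3 - 4*\<mu> + \<mu>^2) / 2)/\<rho> s" using Gam unfolding C_def .
    note PW = pointwise[where e = e and \<rho> = "\<rho> s" and es = "\<epsilon> * sin ph" and ec = "\<epsilon> * cos ph" and ?P1.0 = "P$1" and ?P2.0 = "P$2" and ?P3.0 = "P$3"
       and r = r and m = m and D = D and bb = bb and VV = VV and Vb = Vb and uV = uV and \<mu> = \<mu> and \<Gamma> = "\<Gamma> s" and ?\<Gamma>0.0 = \<Gamma>0
       and \<Phi> = "\<Phi> s" and W' = "w' s" and G' = "\<Gamma>' s",
       OF e0 e1 rho_lo rho_hi es ec Psq r0 rm m1 D2 Dp bb0 bbb CS CS2 VV0 mu Gs' smalle KK' Gam' W'def[unfolded dEeq] G'def[unfolded Eeq C_def]]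
    have wuV: "w s = 1/2 * uV" unfolding w_def uV_def us_def[symmetric] Us_def[symmetric]
      using ub by (simp add: inner_diff_right)
    have eqw: "(2/e) * \<bar>w s\<bar> = \<bar>uV\<bar> / e" unfolding wuV using e0 by (simp add: abs_mult)
    show ?thesis
    proof (rule conjI)
      show "\<bar>\<Gamma>' s\<bar> \<le> (2/e) * w' s" by (rule PW(1))
      show "(2/e) * \<bar>w s\<bar> \<le> \<Gamma>0/8" unfolding eqw by (rule PW(2))
    qed
  qed
  have "\<forall>s\<in>{s1..s2}. \<Gamma> s \<in> {\<Gamma>0/2..3*\<Gamma>0/2}"
  proof (rule bootstrap[where w = w and \<Gamma>' = \<Gamma>' and w' = w' and M = "2/e"])
    show "s1 < s2" by fact
    show "0 < \<Gamma>0" by fact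
    show "\<Gamma> s1 = \<Gamma>0" unfolding \<Gamma>_def G0def ..
    show "0 \<le> 2/e" using e0 by simp
    show "continuous_on {s1..s2} \<Gamma>" using dG unfolding S_def by (rule DERIV_continuous_on)
    show "continuous_on {s1..s2} w" using dw unfolding S_def by (rule DERIV_continuous_on)
    fix s
    show "s1 < s \<Longrightarrow> s < s2 \<Longrightarrow> (\<Gamma> has_real_derivative \<Gamma>' s) (at s)"
      using dG[of s] unfolding S_def by (simp add: at_within_Icc_at)
    show "s1 < s \<Longrightarrow> s < s2 \<Longrightarrow> (w has_real_derivative w' s) (at s)"
      using dw[of s] unfolding S_def by (simp add: at_within_Icc_at)
    show "s \<in> {s1..s2} \<Longrightarrow> \<Gamma> s \<in> {\<Gamma>0/2..3*\<Gamma>0/2} \<Longrightarrow> \<bar>\<Gamma>' s\<bar> \<le> 2/e * w' s \<and> 2/e * \<bar>w s\<bar> \<le> \<Gamma>0/8"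
      using pw unfolding S_def by blast
  qed
  thus ?thesis unfolding \<Gamma>_def .
qed


lemma phi_mono:
  fixes \<phi> :: "real \<Rightarrow> real" and g :: "real \<Rightarrow> real"
  assumes d: "\<forall>s\<in>{s1..s2}. (\<phi> has_real_derivative g s) (at s within {s1..s2})"
    and g0: "\<And>s. 0 \<le> g s"
    and x: "s1 \<le> x" "x \<le> y" "y \<le> s2"
  shows "\<phi> x \<le> \<phi> y"
proof -
  have c: "continuous_on {s1..s2} \<phi>" using d by (intro DERIV_continuous_on) auto
  show ?thesis
  proof (rule DERIV_nonneg_imp_increasing_open[OF x(2)])
    show "continuous_on {x..y} \<phi>" by (rule continuous_on_subset[OF c]) (use x in auto)
    fix z assume z: "x < z" "z < y"
    have "(\<phi> has_real_derivative g z) (at z within {s1..s2})" using d z x by auto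
    hence "(\<phi> has_real_derivative g z) (at z)" using z x by (simp add: at_within_Icc_at)
    thus "\<exists>y. (\<phi> has_real_derivative y) (at z) \<and> 0 \<le> y" using g0 by blast
  qed
qed

theorem mainTheorem4:
  shows "\<exists>\<mu>0 c::real. 0 < \<mu>0 \<and> \<mu>0 < 1/10 \<and> 0 < c \<and>
    (\<forall>\<mu> \<epsilon> f1 f2 (q :: real \<Rightarrow> real^3) (p :: real \<Rightarrow> real^3) s1 s2
        (u :: real \<Rightarrow> real^4) (\<phi> :: real \<Rightarrow> real) (U :: real \<Rightarrow> real^4) (\<Phi> :: real \<Rightarrow> real).
      0 < \<mu> \<and> \<mu> \<le> \<mu>0 \<and> 0 < \<epsilon> \<and> \<epsilon> < 1 \<and>
      f1 < f2 \<and> s1 < s2 \<and>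
      hamiltonian_solution (H_ER3BP \<mu> \<epsilon>) (\<lambda>f. q f + vector [1 - \<mu>, 0, 0]) p {f1..f2} \<and>
      norm (q f1) = \<mu> powr (1/3) \<and> norm (q f2) = \<mu> powr (1/3) \<and>
      (\<forall>f\<in>{f1<..<f2}. 0 < norm (q f) \<and> norm (q f) < \<mu> powr (1/3)) \<and>
      hamiltonian_solution (K_ham \<mu> \<epsilon>) (\<lambda>s. (u s, \<phi> s)) (\<lambda>s. (U s, \<Phi> s)) {s1..s2} \<and>
      (\<forall>s\<in>{s1..s2}. l_KS (u s) (U s) = 0 \<and> K_reg \<mu> \<epsilon> (u s) (\<phi> s) (U s) (\<Phi> s) = 0) \<and>
      (\<forall>s\<in>{s1..s2}. (\<phi> has_real_derivative (norm (u s))^2) (at s within {s1..s2})) \<and>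
      (\<forall>s\<in>{s1..s2}. pi_KS (u s) = q (\<phi> s)) \<and>
      \<phi> s1 = f1 \<and> \<phi> s2 = f2 \<and>
      0 < Gamma_fn \<mu> \<epsilon> (\<phi> s1) (\<Phi> s1) \<and>
      \<mu> < c * (1 - \<epsilon>)^6 * (Gamma_fn \<mu> \<epsilon> (\<phi> s1) (\<Phi> s1)) powr (3/2)
      \<longrightarrow> (\<forall>s\<in>{s1..s2}.
             Gamma_fn \<mu> \<epsilon> (\<phi> s) (\<Phi> s) \<in>
               {Gamma_fn \<mu> \<epsilon> (\<phi> s1) (\<Phi> s1) / 2 .. 3 * Gamma_fn \<mu> \<epsilon> (\<phi> s1) (\<Phi> s1) / 2}))"
proof (rule exI[of _ "1/1000"], rule exI[of _ "1/1000000"], intro conjI)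
  show "0 < (1/1000::real)" "(1/1000::real) < 1/10" "0 < (1/1000000::real)" by simp_all
  show "\<forall>\<mu> \<epsilon> f1 f2 (q :: real \<Rightarrow> real^3) (p :: real \<Rightarrow> real^3) s1 s2
        (u :: real \<Rightarrow> real^4) (\<phi> :: real \<Rightarrow> real) (U :: real \<Rightarrow> real^4) (\<Phi> :: real \<Rightarrow> real).
      0 < \<mu> \<and> \<mu> \<le> 1/1000 \<and> 0 < \<epsilon> \<and> \<epsilon> < 1 \<and>
      f1 < f2 \<and> s1 < s2 \<and>
      hamiltonian_solution (H_ER3BP \<mu> \<epsilon>) (\<lambda>f. q f + vector [1 - \<mu>, 0, 0]) p {f1..f2} \<and>
      norm (q f1) = \<mu> powr (1/3) \<and> norm (q f2) = \<mu> powr (1/3) \<and>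
      (\<forall>f\<in>{f1<..<f2}. 0 < norm (q f) \<and> norm (q f) < \<mu> powr (1/3)) \<and>
      hamiltonian_solution (K_ham \<mu> \<epsilon>) (\<lambda>s. (u s, \<phi> s)) (\<lambda>s. (U s, \<Phi> s)) {s1..s2} \<and>
      (\<forall>s\<in>{s1..s2}. l_KS (u s) (U s) = 0 \<and> K_reg \<mu> \<epsilon> (u s) (\<phi> s) (U s) (\<Phi> s) = 0) \<and>
      (\<forall>s\<in>{s1..s2}. (\<phi> has_real_derivative (norm (u s))^2) (at s within {s1..s2})) \<and>
      (\<forall>s\<in>{s1..s2}. pi_KS (u s) = q (\<phi> s)) \<and>
      \<phi> s1 = f1 \<and> \<phi> s2 = f2 \<and>
      0 < Gamma_fn \<mu> \<epsilon> (\<phi> s1) (\<Phi> s1) \<and>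
      \<mu> < 1/1000000 * (1 - \<epsilon>)^6 * (Gamma_fn \<mu> \<epsilon> (\<phi> s1) (\<Phi> s1)) powr (3/2)
      \<longrightarrow> (\<forall>s\<in>{s1..s2}.
             Gamma_fn \<mu> \<epsilon> (\<phi> s) (\<Phi> s) \<in>
               {Gamma_fn \<mu> \<epsilon> (\<phi> s1) (\<Phi> s1) / 2 .. 3 * Gamma_fn \<mu> \<epsilon> (\<phi> s1) (\<Phi> s1) / 2})"
  proof (intro allI impI, elim conjE)
    fix \<mu> \<epsilon> f1 f2 s1 s2 :: real and q p :: "real \<Rightarrow> real^3" and u U :: "real \<Rightarrow> real^4" and \<phi> \<Phi> :: "real \<Rightarrow> real"
    assume mu0: "0 < \<mu>" and mu1: "\<mu> \<le> 1/1000" and eps0: "0 < \<epsilon>" and eps1: "\<epsilon> < 1"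
      and f12: "f1 < f2" and s12: "s1 < s2"
      and hq: "hamiltonian_solution (H_ER3BP \<mu> \<epsilon>) (\<lambda>f. q f + vector [1 - \<mu>, 0, 0]) p {f1..f2}"
      and nq1: "norm (q f1) = \<mu> powr (1/3)" and nq2: "norm (q f2) = \<mu> powr (1/3)"
      and nqi: "\<forall>f\<in>{f1<..<f2}. 0 < norm (q f) \<and> norm (q f) < \<mu> powr (1/3)"
      and ham: "hamiltonian_solution (K_ham \<mu> \<epsilon>) (\<lambda>s. (u s, \<phi> s)) (\<lambda>s. (U s, \<Phi> s)) {s1..s2}"
      and lK: "\<forall>s\<in>{s1..s2}. l_KS (u s) (U s) = 0 \<and> K_reg \<mu> \<epsilon> (u s) (\<phi> s) (U s) (\<Phi> s) = 0"
      and phid: "\<forall>s\<in>{s1..s2}. (\<phi> has_real_derivative (norm (u s))^2) (at s within {s1..s2})"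
      and piq: "\<forall>s\<in>{s1..s2}. pi_KS (u s) = q (\<phi> s)"
      and ph1: "\<phi> s1 = f1" and ph2: "\<phi> s2 = f2"
      and G0: "0 < Gamma_fn \<mu> \<epsilon> (\<phi> s1) (\<Phi> s1)"
      and cond: "\<mu> < 1/1000000 * (1 - \<epsilon>)^6 * (Gamma_fn \<mu> \<epsilon> (\<phi> s1) (\<Phi> s1)) powr (3/2)"
    define \<Gamma>0 where "\<Gamma>0 = Gamma_fn \<mu> \<epsilon> (\<phi> s1) (\<Phi> s1)"
    define m where "m = \<mu> powr (1/3)"
    have m0: "0 < m" unfolding m_def using mu0 by simp
    have m3: "m^3 = \<mu>"
    proof -
      have "m^3 = m powr 3" using m0 by simp
      also have "\<dots> = \<mu> powr (1/3 * 3)" unfolding m_def by (rule powr_powr)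
      also have "\<dots> = \<mu>" using mu0 by simp
      finally show ?thesis .
    qed
    have m1: "m \<le> 1/10"
    proof -
      have "m^Suc 2 \<le> (1/10)^Suc 2" using m3 mu1 by (simp add: power_divide)
      thus ?thesis by (rule power_le_imp_le_base) simp
    qed
    define g where "g = sqrt \<Gamma>0"
    have g0: "0 < g" unfolding g_def \<Gamma>0_def using G0 by simp
    have gg: "g^2 = \<Gamma>0" unfolding g_def using G0 \<Gamma>0_def by simp
    have G32: "\<Gamma>0 powr (3/2) = g^3"
    proof -
      have "g^3 = g powr 3" using g0 by simp
      also have "\<dots> = (\<Gamma>0 powr (1/2)) powr 3" unfolding g_def using G0 \<Gamma>0_def by (simp add: powr_half_sqrt)
      also have "\<dots> = \<Gamma>0 powr (3/2)" by (simp add: powr_powr)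
      finally show ?thesis ..
    qed
    define e where "e = 1 - \<epsilon>"
    have e0: "0 < e" using eps1 unfolding e_def by simp
    have small: "m^2 \<le> (1-\<epsilon>)^4 * \<Gamma>0 / 10000"
    proof -
      have "m^Suc 2 < (e^2 * g / 100)^Suc 2"
        using cond m3 unfolding e_def[symmetric] \<Gamma>0_def[symmetric]
        by (simp add: G32 power_mult_distrib power_divide power_mult[symmetric])
      hence "m < e^2 * g / 100" by (rule power_less_imp_less_base) (use e0 g0 in simp)
      hence "m^2 < (e^2 * g / 100)^2" using m0 by (intro power_strict_mono) auto
      also have "\<dots> = e^4 * g^2 / 10000" by (simp add: power_mult_distrib power_divide power_mult[symmetric])
      finally show ?thesis unfolding gg e_def by simp
    qed
    have rb: "\<forall>s\<in>{s1..s2}. (norm (u s))^2 \<le> m"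
    proof
      fix s assume s: "s \<in> {s1..s2}"
      have "\<phi> s1 \<le> \<phi> s" by (rule phi_mono[OF phid]) (use s in auto)
      moreover have "\<phi> s \<le> \<phi> s2" by (rule phi_mono[OF phid]) (use s in auto)
      ultimately have fs: "f1 \<le> \<phi> s" "\<phi> s \<le> f2" using ph1 ph2 by auto
      have "(norm (u s))^2 = norm (q (\<phi> s))" using piq s norm_pi by metis
      also have "\<dots> \<le> m"
      proof (cases "\<phi> s = f1 \<or> \<phi> s = f2")
        case True thus ?thesis using nq1 nq2 unfolding m_def by auto
      next
        case False
        hence "\<phi> s \<in> {f1<..<f2}" using fs by auto
        thus ?thesis using nqi unfolding m_def by fastforce
      qed
      finally show "(norm (u s))^2 \<le> m" .
    qed
    have K0: "\<forall>s\<in>{s1..s2}. K_reg \<mu> \<epsilon> (u s) (\<phi> s) (U s) (\<Phi> s) = 0" using lK by blast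
    have G0': "0 < \<Gamma>0" unfolding \<Gamma>0_def by (rule G0)
    have "\<forall>s\<in>{s1..s2}. Gamma_fn \<mu> \<epsilon> (\<phi> s) (\<Phi> s) \<in> {\<Gamma>0/2..3*\<Gamma>0/2}"
      by (rule core[OF m3 less_imp_le[OF m0] m1 eps0 eps1 s12 ham K0 phid rb \<Gamma>0_def G0' small])
    thus "\<forall>s\<in>{s1..s2}. Gamma_fn \<mu> \<epsilon> (\<phi> s) (\<Phi> s) \<in>
               {Gamma_fn \<mu> \<epsilon> (\<phi> s1) (\<Phi> s1) / 2 .. 3 * Gamma_fn \<mu> \<epsilon> (\<phi> s1) (\<Phi> s1) / 2}"
      unfolding \<Gamma>0_def .
  qed
qed

end
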